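(* Let $t \geq 3$ be an integer and let $G$ be a finite, simple, connected graph that does not contain the path $P_t$ on $t$ vertices as an induced subgraph. Then in the game of cops and robbers on $G$, $t-2$ cops have a strategy that captures the robber in at most $t-1$ moves.
   Context: The game of cops and robbers on a finite simple graph $G$ with $k$ cops and one robber: first each cop chooses a starting vertex, then the robber chooses a starting vertex; thereafter the players alternate turns, starting with the cops. On the cops' turn, each cop either stays at its vertex or moves to an adjacent vertex; on the robber's turn, the robber either stays at his vertex or moves to an adjacent vertex. The cops capture the robber (and win) if at some point a cop occupies the same vertex as the robber. A "move" counts one turn of the cop player (the initial placement of the cops counting as the first move). $P_t$ denotes the path graph on $t$ vertices, and "induced subgraph" has its usual meaning. *)

theory Defs
  imports Main
begin

definition simple_graph :: "'a set \<Rightarrow> ('a \<Rightarrow> 'a \<Rightarrow> bool) \<Rightarrow> bool" where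
  "simple_graph V E \<longleftrightarrow> finite V \<and> (\<forall>u v. E u v \<longrightarrow> u \<in> V \<and> v \<in> V)
     \<and> (\<forall>u v. E u v \<longrightarrow> E v u) \<and> (\<forall>v. \<not> E v v)"

definition connected_graph :: "'a set \<Rightarrow> ('a \<Rightarrow> 'a \<Rightarrow> bool) \<Rightarrow> bool" where
  "connected_graph V E \<longleftrightarrow> V \<noteq> {} \<and> (\<forall>u\<in>V. \<forall>v\<in>V. E\<^sup>*\<^sup>* u v)"

definition has_induced_path :: "'a set \<Rightarrow> ('a \<Rightarrow> 'a \<Rightarrow> bool) \<Rightarrow> nat \<Rightarrow> bool" where
  "has_induced_path V E t \<longleftrightarrow> (\<exists>f :: nat \<Rightarrow> 'a. inj_on f {..<t} \<and> (\<forall>i<t. f i \<in> V) \<and>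
      (\<forall>i<t. \<forall>j<t. E (f i) (f j) \<longleftrightarrow> (i = j + 1 \<or> j = i + 1)))"

definition captured :: "nat \<Rightarrow> (nat \<Rightarrow> 'a) \<Rightarrow> 'a \<Rightarrow> bool" where
  "captured k C r \<longleftrightarrow> (\<exists>i<k. C i = r)"

definition cop_step :: "('a \<Rightarrow> 'a \<Rightarrow> bool) \<Rightarrow> nat \<Rightarrow> (nat \<Rightarrow> 'a) \<Rightarrow> (nat \<Rightarrow> 'a) \<Rightarrow> bool" where
  "cop_step E k C C' \<longleftrightarrow> (\<forall>i<k. C' i = C i \<or> E (C i) (C' i))"

text \<open>cops_win E k n C r: cops at C, robber at r, cops to move; the cops can force
  capture using at most n further cop moves (the robber moves after each cop move).\<close>
fun cops_win :: "('a \<Rightarrow> 'a \<Rightarrow> bool) \<Rightarrow> nat \<Rightarrow> nat \<Rightarrow> (nat \<Rightarrow> 'a) \<Rightarrow> 'a \<Rightarrow> bool" where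
  "cops_win E k 0 C r \<longleftrightarrow> captured k C r"
| "cops_win E k (Suc n) C r \<longleftrightarrow> captured k C r \<or>
     (\<exists>C'. cop_step E k C C' \<and>
        (captured k C' r \<or> (\<forall>r'. (r' = r \<or> E r r') \<longrightarrow> cops_win E k n C' r')))"

text \<open>k cops capture the robber in at most m moves, where the initial placement of the
  cops counts as the first move (so m \<ge> 1 is needed).\<close>
definition capture_within :: "'a set \<Rightarrow> ('a \<Rightarrow> 'a \<Rightarrow> bool) \<Rightarrow> nat \<Rightarrow> nat \<Rightarrow> bool" where
  "capture_within V E k m \<longleftrightarrow> 1 \<le> m \<and>
     (\<exists>C0. (\<forall>i<k. C0 i \<in> V) \<and> (\<forall>r0\<in>V. cops_win E k (m - 1) C0 r0))"

end

theory Submission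
  imports Defs
begin

definition avoid :: "('a \<Rightarrow> 'a \<Rightarrow> bool) \<Rightarrow> 'a set \<Rightarrow> 'a \<Rightarrow> bool" where
  "avoid E S x \<longleftrightarrow> x \<notin> S \<and> (\<forall>s\<in>S. \<not> E s x)"

definition RS :: "('a \<Rightarrow> 'a \<Rightarrow> bool) \<Rightarrow> 'a set \<Rightarrow> 'a \<Rightarrow> 'a \<Rightarrow> bool" where
  "RS E S u v \<longleftrightarrow> E u v \<and> avoid E S u \<and> avoid E S v"

definition ipath :: "'a set \<Rightarrow> ('a \<Rightarrow> 'a \<Rightarrow> bool) \<Rightarrow> 'a list \<Rightarrow> bool" where
  "ipath V E xs \<longleftrightarrow> distinct xs \<and> set xs \<subseteq> V \<and>
     (\<forall>j<length xs. \<forall>l<length xs. E (xs!j) (xs!l) \<longleftrightarrow> (j = l+1 \<or> l = j+1))"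

definition inv :: "'a set \<Rightarrow> ('a \<Rightarrow> 'a \<Rightarrow> bool) \<Rightarrow> 'a list \<Rightarrow> 'a \<Rightarrow> bool" where
  "inv V E P r \<longleftrightarrow> ipath V E P \<and> P \<noteq> [] \<and> r \<in> V \<and>
     (\<not> avoid E (set P) r \<or> (\<exists>w d. E (last P) w \<and> avoid E (set (butlast P)) w \<and> E w d
        \<and> avoid E (set P) d \<and> (RS E (set P))\<^sup>*\<^sup>* d r))"

definition cpos :: "'a list \<Rightarrow> nat \<Rightarrow> 'a" where
  "cpos P j = P ! min j (length P - 1)"

lemma reach_exit:
  "R\<^sup>*\<^sup>* a b \<Longrightarrow> \<not> Q a \<Longrightarrow> Q b \<Longrightarrow>
    \<exists>x y. R x y \<and> \<not> Q x \<and> Q y \<and> (\<lambda>u v. R u v \<and> Q u \<and> Q v)\<^sup>*\<^sup>* y b"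
proof (induction rule: rtranclp_induct)
  case base then show ?case by simp
next
  case (step b c)
  show ?case
  proof (cases "Q b")
    case True
    with step obtain x y where xy: "R x y" "\<not> Q x" "Q y" "(\<lambda>u v. R u v \<and> Q u \<and> Q v)\<^sup>*\<^sup>* y b"
      by blast
    have "(\<lambda>u v. R u v \<and> Q u \<and> Q v)\<^sup>*\<^sup>* y c"
      using xy(4) step True by (simp add: rtranclp.rtrancl_into_rtrancl)
    then show ?thesis using xy by blast
  next
    case False then show ?thesis using step by blast
  qed
qed

lemma ipath_ext:
  assumes sg: "simple_graph V E" and ip: "ipath V E xs" and ne: "xs \<noteq> []"
    and xV: "x \<in> V" and el: "E (last xs) x" and av: "avoid E (set (butlast xs)) x"
  shows "ipath V E (xs @ [x])"
proof -
  have sym: "\<And>u v. E u v \<Longrightarrow> E v u" and irr: "\<And>v. \<not> E v v"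
    using sg unfolding simple_graph_def by auto
  define n where "n = length xs"
  have n1: "n \<ge> 1" using ne n_def by (cases xs) auto
  have lastn: "last xs = xs ! (n - 1)" using ne n_def by (simp add: last_conv_nth)
  have nadj: "\<And>j. j < n - 1 \<Longrightarrow> \<not> E (xs!j) x \<and> xs!j \<noteq> x"
  proof -
    fix j assume j: "j < n - 1"
    have "xs ! j = butlast xs ! j" using j n_def by (simp add: nth_butlast)
    moreover have "j < length (butlast xs)" using j n_def by simp
    ultimately have "xs ! j \<in> set (butlast xs)" by simp
    then show "\<not> E (xs!j) x \<and> xs!j \<noteq> x" using av unfolding avoid_def by auto
  qed
  have xnot: "x \<notin> set xs"
  proof
    assume "x \<in> set xs"
    then obtain j where j: "j < n" "xs ! j = x" using n_def by (auto simp: in_set_conv_nth)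
    show False
    proof (cases "j = n - 1")
      case True then show False using j el lastn irr by auto
    next
      case False
      then have "j < n - 1" using j(1) by linarith
      then show False using nadj[of j] j(2) by blast
    qed
  qed
  have adj: "E (xs!j) x \<longleftrightarrow> j = n - 1" if jn: "j < n" for j
  proof (cases "j = n - 1")
    case True then show ?thesis using el lastn by simp
  next
    case False
    then have "j < n - 1" using jn by linarith
    then show ?thesis using nadj[of j] False by blast
  qed
  have dist: "distinct (xs @ [x])" using ip xnot unfolding ipath_def by simp
  have sub: "set (xs @ [x]) \<subseteq> V" using ip xV unfolding ipath_def by simp
  have "\<forall>j<n+1. \<forall>l<n+1. E ((xs@[x])!j) ((xs@[x])!l) \<longleftrightarrow> (j = l+1 \<or> l = j+1)"
  proof (intro allI impI)
    fix j l assume j: "j < n+1" and l: "l < n+1"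
    show "E ((xs@[x])!j) ((xs@[x])!l) \<longleftrightarrow> (j = l+1 \<or> l = j+1)"
    proof (cases "j < n")
      case jn: True
      show ?thesis
      proof (cases "l < n")
        case True
        then show ?thesis using jn ip n_def unfolding ipath_def by (simp add: nth_append)
      next
        case False
        then have "l = n" using l by simp
        then show ?thesis using jn adj[of j] n1 by (simp add: nth_append n_def) linarith
      qed
    next
      case jn: False
      then have jeq: "j = n" using j by simp
      show ?thesis
      proof (cases "l < n")
        case True
        have e1: "(xs@[x])!j = x" using jeq by (simp add: nth_append n_def)
        have e2: "(xs@[x])!l = xs!l" using True by (simp add: nth_append n_def)
        have "E x (xs!l) \<longleftrightarrow> E (xs!l) x" using sym by blast
        also have "\<dots> \<longleftrightarrow> l = n - 1" using adj[OF True] .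
        also have "\<dots> \<longleftrightarrow> (j = l+1 \<or> l = j+1)" using jeq True n1 by linarith
        finally show ?thesis using e1 e2 by simp
      next
        case False
        then have "l = n" using l by simp
        then show ?thesis using jeq irr by (simp add: nth_append n_def)
      qed
    qed
  qed
  then show ?thesis using dist sub n_def unfolding ipath_def by simp
qed

lemma capture_now:
  assumes ne: "P \<noteq> []" and na: "\<not> avoid E (set P) r" and len: "length P \<le> k"
  shows "cops_win E k (Suc n) (cpos P) r"
proof -
  from na consider "r \<in> set P" | s where "s \<in> set P" "E s r" unfolding avoid_def by auto
  then show ?thesis
  proof cases
    case 1
    then obtain j where j: "j < length P" "P ! j = r" by (auto simp: in_set_conv_nth)
    have "min j (length P - 1) = j" using j by simp
    then have "cpos P j = r" using j unfolding cpos_def by simp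
    then have "captured k (cpos P) r" unfolding captured_def using j len by (intro exI[of _ j]) auto
    then show ?thesis by simp
  next
    case 2
    then obtain j where j: "j < length P" "P ! j = s" by (auto simp: in_set_conv_nth)
    have "min j (length P - 1) = j" using j by simp
    then have cj: "cpos P j = s" using j unfolding cpos_def by simp
    define C' where "C' = (cpos P)(j := r)"
    have "cop_step E k (cpos P) C'" unfolding cop_step_def C'_def using cj 2 by auto
    moreover have "captured k C' r" unfolding captured_def C'_def using j len
      by (intro exI[of _ j]) auto
    ultimately show ?thesis by auto
  qed
qed

lemma main:
  assumes sg: "simple_graph V E" and nh: "\<not> has_induced_path V E (k+2)"
  shows "k - length P = m \<Longrightarrow> inv V E P r \<Longrightarrow> length P \<le> k \<Longrightarrow>
    cops_win E k (Suc m) (cpos P) r"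
proof (induction m arbitrary: P r)
  case 0
  have ne: "P \<noteq> []" using 0 unfolding inv_def by simp
  show ?case
  proof (cases "avoid E (set P) r")
    case False
    then show ?thesis using capture_now[OF ne False] 0 by blast
  next
    case True
    from 0(2) True obtain w d where wd: "E (last P) w" "avoid E (set (butlast P)) w" "E w d"
      "avoid E (set P) d" unfolding inv_def by auto
    have sym: "\<And>u v. E u v \<Longrightarrow> E v u" and irr: "\<And>v. \<not> E v v"
      and inV: "\<And>u v. E u v \<Longrightarrow> u \<in> V \<and> v \<in> V"
      using sg unfolding simple_graph_def by auto
    have ip1: "ipath V E (P @ [w])"
      using ipath_ext[OF sg _ ne _ wd(1) wd(2)] 0(2) inV wd(1) unfolding inv_def by auto
    have avd: "avoid E (set (butlast (P @ [w]))) d" using wd(4) by simp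
    have ip2: "ipath V E (P @ [w] @ [d])"
      using ipath_ext[OF sg ip1 _ _ _ avd] inV wd(3) by auto
    have len: "length (P @ [w] @ [d]) = k + 2" using 0 by simp
    have allV: "\<forall>i<k+2. (P @ [w] @ [d]) ! i \<in> V"
    proof (intro allI impI)
      fix i assume "i < k+2"
      then have "(P @ [w] @ [d]) ! i \<in> set (P @ [w] @ [d])" using len by (intro nth_mem) simp
      then show "(P @ [w] @ [d]) ! i \<in> V" using ip2 unfolding ipath_def by blast
    qed
    have "has_induced_path V E (k+2)"
      unfolding has_induced_path_def
      apply (rule exI[of _ "nth (P @ [w] @ [d])"])
      using ip2 len allV unfolding ipath_def
      by (auto intro!: inj_on_nth)
    then show ?thesis using nh by simp
  qed
next
  case (Suc m)
  have ne: "P \<noteq> []" using Suc unfolding inv_def by simp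
  show ?case
  proof (cases "avoid E (set P) r")
    case False
    then show ?thesis using capture_now[OF ne False] Suc by blast
  next
    case avr: True
    from Suc(3) avr obtain w d where wd: "E (last P) w" "avoid E (set (butlast P)) w" "E w d"
      "avoid E (set P) d" "(RS E (set P))\<^sup>*\<^sup>* d r" unfolding inv_def by auto
    have sym: "\<And>u v. E u v \<Longrightarrow> E v u" and irr: "\<And>v. \<not> E v v"
      and inV: "\<And>u v. E u v \<Longrightarrow> u \<in> V \<and> v \<in> V"
      using sg unfolding simple_graph_def by auto
    have rV: "r \<in> V" using Suc(3) unfolding inv_def by simp
    define P' where "P' = P @ [w]"
    have ip1: "ipath V E P'"
      using ipath_ext[OF sg _ ne _ wd(1) wd(2)] Suc(3) inV wd(1) unfolding inv_def P'_def by auto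
    have lenP': "length P' = length P + 1" unfolding P'_def by simp
    have step: "cop_step E k (cpos P) (cpos P')"
      unfolding cop_step_def
    proof (intro allI impI)
      fix j assume "j < k"
      show "cpos P' j = cpos P j \<or> E (cpos P j) (cpos P' j)"
      proof (cases "j < length P")
        case True
        then have "min j (length P - 1) = j" "min j (length P' - 1) = j" unfolding P'_def by auto
        then show ?thesis unfolding cpos_def using True unfolding P'_def by (simp add: nth_append)
      next
        case False
        then have m1: "min j (length P - 1) = length P - 1" "min j (length P' - 1) = length P"
          unfolding P'_def by auto
        have "cpos P j = last P" unfolding cpos_def m1(1) using ne by (simp add: last_conv_nth)
        moreover have "cpos P' j = w" unfolding cpos_def m1(2) unfolding P'_def by simp
        ultimately have "cpos P j = last P" "cpos P' j = w" by auto
        then show ?thesis using wd(1) by simp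
      qed
    qed
    have lastS: "last P \<in> set P" using ne by simp
    have wnav: "\<not> avoid E (set P) w" using wd(1) lastS unfolding avoid_def by auto
    have rest: "cops_win E k (Suc m) (cpos P') r'" if r': "r' = r \<or> E r r'" for r'
    proof -
      have r'V: "r' \<in> V" using r' rV inV by auto
      have "inv V E P' r'"
      proof (cases "avoid E (set P') r'")
        case False
        then show ?thesis unfolding inv_def using ip1 r'V P'_def by auto
      next
        case avr': True
        have sP': "set P' = insert w (set P)" unfolding P'_def by simp
        have avS: "avoid E (set P) r'" using avr' sP' unfolding avoid_def by auto
        have reach: "(RS E (set P))\<^sup>*\<^sup>* d r'"
          using r'
        proof
          assume "r' = r" then show ?thesis using wd(5) by simp
        next
          assume "E r r'"
          then have "RS E (set P) r r'" using avr avS unfolding RS_def by simp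
          then show ?thesis using wd(5) by (simp add: rtranclp.rtrancl_into_rtrancl)
        qed
        have nd: "\<not> avoid E (set P') d" using wd(3) sP' unfolding avoid_def by auto
        obtain x y where xy: "RS E (set P) x y" "\<not> avoid E (set P') x" "avoid E (set P') y"
          "(\<lambda>u v. RS E (set P) u v \<and> avoid E (set P') u \<and> avoid E (set P') v)\<^sup>*\<^sup>* y r'"
          using reach_exit[OF reach nd avr'] by blast
        have r2: "(RS E (set P'))\<^sup>*\<^sup>* y r'"
          using xy(4) by (rule rtranclp_mono[THEN predicate2D, rotated]) (auto simp: RS_def)
        have axS: "avoid E (set P) x" using xy(1) unfolding RS_def by simp
        have "x \<noteq> w" using axS wnav by auto
        then have ewx: "E w x" using xy(2) axS sP' unfolding avoid_def by auto
        have "E (last P') x" "avoid E (set (butlast P')) x" "E x y" "avoid E (set P') y"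
          using ewx axS xy(1,3) unfolding P'_def RS_def by auto
        then show ?thesis unfolding inv_def using ip1 r'V r2 P'_def by blast
      qed
      then show ?thesis using Suc.IH[of P' r'] Suc.prems lenP' by simp
    qed
    have "cops_win E k (Suc (Suc m)) (cpos P) r"
      unfolding cops_win.simps(2)[of E k "Suc m"] using step rest by blast
    then show ?thesis .
  qed
qed

theorem mainTheorem1:
  fixes V :: "'a set" and E :: "'a \<Rightarrow> 'a \<Rightarrow> bool" and t :: nat
  assumes "t \<ge> 3"
    and "simple_graph V E"
    and "connected_graph V E"
    and "\<not> has_induced_path V E t"
  shows "capture_within V E (t - 2) (t - 1)"
proof -
  define k where "k = t - 2"
  have tk: "t = k + 2" "k \<ge> 1" using assms(1) k_def by auto
  obtain v where v: "v \<in> V" using assms(3) unfolding connected_graph_def by auto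
  have sg: "simple_graph V E" by fact
  have sym: "\<And>u v. E u v \<Longrightarrow> E v u" and irr: "\<And>v. \<not> E v v"
    and inV: "\<And>u v. E u v \<Longrightarrow> u \<in> V \<and> v \<in> V"
    using sg unfolding simple_graph_def by auto
  have ip: "ipath V E [v]" using v irr unfolding ipath_def by auto
  have cp: "cpos [v] = (\<lambda>j. v)" unfolding cpos_def by auto
  have win: "cops_win E k (t - 2) (\<lambda>j. v) r0" if r0: "r0 \<in> V" for r0
  proof -
    have "inv V E [v] r0"
    proof (cases "avoid E {v} r0")
      case False
      then show ?thesis using ip r0 unfolding inv_def by auto
    next
      case True
      have "E\<^sup>*\<^sup>* v r0" using assms(3) v r0 unfolding connected_graph_def by auto
      moreover have "\<not> avoid E {v} v" unfolding avoid_def by simp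
      ultimately obtain x y where xy: "E x y" "\<not> avoid E {v} x" "avoid E {v} y"
        "(\<lambda>u w. E u w \<and> avoid E {v} u \<and> avoid E {v} w)\<^sup>*\<^sup>* y r0"
        using reach_exit[of E v r0 "avoid E {v}"] True by blast
      have "x \<noteq> v" using xy(1,3) unfolding avoid_def by auto
      then have "E v x" using xy(2) unfolding avoid_def by auto
      moreover have "(RS E {v})\<^sup>*\<^sup>* y r0" using xy(4) unfolding RS_def by simp
      ultimately show ?thesis unfolding inv_def using ip r0 xy(1,3)
        by (auto simp: avoid_def)
    qed
    then have "cops_win E k (Suc (k - 1)) (cpos [v]) r0"
      using main[OF sg, where k=k and m="k - 1" and P="[v]" and r=r0] assms(4) tk by simp
    then show ?thesis using cp tk by simp
  qed
  show ?thesis unfolding capture_within_def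
    using win v tk unfolding k_def[symmetric] by (intro conjI exI[of _ "\<lambda>j. v"]) auto
qed

end
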